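(* Let $m\ge1$, let $D$ be a finite set with $|D|=3m$ whose elements are numbered $1,\dots,3m$, and let $\mathcal{C}=\{c_1,\dots,c_\tau\}$ be a collection of $\tau\ge m$ three-element subsets of $D$. For each $i$, let $g_i\in\mathbb{R}^{3m}$ be given by $(g_i)_j=1$ if element $j$ of $D$ lies in $c_i$ and $(g_i)_j=0$ otherwise. For any integer $l\le m$ and $\mathcal{L}=\{i_1,\dots,i_l\}\subseteq\{1,\dots,\tau\}$, let $G_{\mathcal{L}}=[g_{i_1}\ \cdots\ g_{i_l}]$ and $r=\mathrm{rank}(G_{\mathcal{L}})$. Let $d=[1\ \cdots\ 1]^T\in\mathbb{R}^{3m}$. Suppose $\mathcal{C}$ contains no exact cover of $D$ (a subcollection in which every element of $D$ occurs in exactly one member). Then for every such $\mathcal{L}$ with $|\mathcal{L}|\le m$ there exists an orthogonal matrix $N\in\mathbb{R}^{3m\times3m}$ such that $$\begin{bmatrix} d^T\\ G_{\mathcal{L}}^T\end{bmatrix}N=\begin{bmatrix}\gamma & \beta\\ \mathbf{0} & \tilde G_{\mathcal{L}}^T\end{bmatrix},$$ where $\tilde G_{\mathcal{L}}^T\in\mathbb{R}^{l\times r}$ has full column rank, $\gamma\in\mathbb{R}^{1\times(3m-r)}$ has at least one entry (say $\omega\ge1$ entries) equal to $1$, and $\beta\in\mathbb{R}^{1\times r}$. Furthermore, elementary row operations transform $\begin{bmatrix}\gamma & \beta\\ \mathbf{0} & \tilde G_{\mathcal{L}}^T\end{bmatrix}$ into $\begin{bmatrix}\gamma & \mathbf{0}\\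 \mathbf{0} & \tilde G_{\mathcal{L}}^T\end{bmatrix}$. *)

theory Defs
  imports "Jordan_Normal_Form.DL_Rank" "Jordan_Normal_Form.Gauss_Jordan_Elimination"
begin

definition real_orthogonal :: "nat \<Rightarrow> real mat \<Rightarrow> bool" where
  "real_orthogonal n N \<longleftrightarrow> N \<in> carrier_mat n n \<and> transpose_mat N * N = 1\<^sub>m n"

inductive elem_row_op :: "real mat \<Rightarrow> real mat \<Rightarrow> bool" where
  swap: "i < dim_row A \<Longrightarrow> j < dim_row A \<Longrightarrow> elem_row_op A (mat_swaprows i j A)"
| scale: "k < dim_row A \<Longrightarrow> a \<noteq> 0 \<Longrightarrow> elem_row_op A (mat_multrow k a A)"
| add: "k < dim_row A \<Longrightarrow> l < dim_row A \<Longrightarrow> k \<noteq> l \<Longrightarrow> elem_row_op A (mat_addrow a k l A)"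

definition row_ops_transform :: "real mat \<Rightarrow> real mat \<Rightarrow> bool" where
  "row_ops_transform A B \<longleftrightarrow> elem_row_op\<^sup>*\<^sup>* A B"

definition incidence_vec :: "nat \<Rightarrow> nat set \<Rightarrow> real vec" where
  "incidence_vec n c = vec n (\<lambda>j. if j \<in> c then 1 else 0)"

definition has_exact_cover :: "nat \<Rightarrow> nat \<Rightarrow> (nat \<Rightarrow> nat set) \<Rightarrow> bool" where
  "has_exact_cover n tau c \<longleftrightarrow>
     (\<exists>S \<subseteq> {..<tau}. \<forall>x < n. card {i \<in> S. x \<in> c i} = 1)"

end

theory Submission
  imports Defs
begin

abbreviation rspan :: "nat \<Rightarrow> real vec set \<Rightarrow> real vec set" where
  "rspan n S \<equiv> LinearCombinations.module.span class_ring (module_vec TYPE(real) n) S"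

lemma span_mat1:
  assumes "set xs \<subseteq> carrier_vec n" "a \<in> carrier_vec (length xs)"
  shows "mat_of_cols n xs *\<^sub>v a \<in> rspan n (set xs)"
proof -
  interpret V: vec_space "TYPE(real)" n .
  have "mat_of_cols n xs *\<^sub>v a = V.lincomb_list (\<lambda>i. a $ i) xs"
    using assms by (subst V.lincomb_list_as_mat_mult) (auto intro!: arg_cong2[where f="(*\<^sub>v)"])
  also have "\<dots> \<in> V.span_list xs" unfolding V.span_list_def by auto
  finally show ?thesis using V.span_list_as_span[OF assms(1)] by simp
qed

lemma span_mat2:
  assumes "set xs \<subseteq> carrier_vec n" "y \<in> rspan n (set xs)"
  shows "\<exists>a \<in> carrier_vec (length xs). y = mat_of_cols n xs *\<^sub>v a"
proof -
  interpret V: vec_space "TYPE(real)" n .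
  from assms have "y \<in> V.span_list xs" using V.span_list_as_span[OF assms(1)] by simp
  then obtain c where "y = V.lincomb_list c xs" unfolding V.span_list_def by auto
  also have "\<dots> = mat_of_cols n xs *\<^sub>v vec (length xs) c"
    using assms by (subst V.lincomb_list_as_mat_mult) auto
  finally show ?thesis by auto
qed

lemma perp_span:
  fixes w :: "real vec"
  assumes "set xs \<subseteq> carrier_vec n" "w \<in> carrier_vec n" "\<forall>x\<in>set xs. x \<bullet> w = 0"
    "y \<in> rspan n (set xs)"
  shows "y \<bullet> w = 0"
proof -
  obtain a where a: "a \<in> carrier_vec (length xs)" "y = mat_of_cols n xs *\<^sub>v a"
    using span_mat2[OF assms(1,4)] by auto
  have X: "mat_of_cols n xs \<in> carrier_mat n (length xs)" by auto
  have cc: "\<And>i. i < length xs \<Longrightarrow> col (mat_of_cols n xs) i = xs!i"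
    using assms(1) by (intro col_mat_of_cols) auto
  have z: "transpose_mat (mat_of_cols n xs) *\<^sub>v w = 0\<^sub>v (length xs)"
    using assms(3) cc by (intro eq_vecI) auto
  have ya: "mat_of_cols n xs *\<^sub>v a \<in> carrier_vec n" by (rule mult_mat_vec_carrier[OF X a(1)])
  have "y \<bullet> w = w \<bullet> (mat_of_cols n xs *\<^sub>v a)" using a comm_scalar_prod[OF ya assms(2)]
    by simp
  also have "\<dots> = (transpose_mat (mat_of_cols n xs) *\<^sub>v w) \<bullet> a"
    using transpose_vec_mult_scalar[OF X a(1) assms(2)] by simp
  finally show ?thesis using z a by simp
qed

lemma self_sp_zero:
  fixes v :: "real vec"
  assumes "v \<in> carrier_vec n" "v \<bullet> v = 0" shows "v = 0\<^sub>v n"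
  using conjugate_square_eq_0_vec[OF assms(1)] assms(2) by (simp add: scalar_prod_def)

lemma self_sp_ge: "(v::real vec) \<bullet> v \<ge> 0"
  using conjugate_square_ge_0_vec[of v] by simp

lemma rank_inj:
  fixes A :: "real mat"
  assumes A: "A \<in> carrier_mat n r"
    and inj: "\<And>v. v \<in> carrier_vec r \<Longrightarrow> A *\<^sub>v v = 0\<^sub>v n \<Longrightarrow> v = 0\<^sub>v r"
  shows "vec_space.rank n A = r"
proof -
  interpret V: vec_space "TYPE(real)" n .
  have dist: "distinct (cols A)"
  proof (rule ccontr)
    assume "\<not> distinct (cols A)"
    then obtain i j where ij: "i < r" "j < r" "i \<noteq> j" "cols A ! i = cols A ! j"
      using A by (auto simp: distinct_conv_nth)
    define v :: "real vec" where "v = unit_vec r i - unit_vec r j"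
    have v: "v \<in> carrier_vec r" unfolding v_def by auto
    have "v $ i \<noteq> 0" using ij unfolding v_def
      by (subst index_minus_vec(1)) (auto simp: unit_vec_def)
    hence nz: "v \<noteq> 0\<^sub>v r" using ij by auto
    have ci: "col A i = col A j" using ij A by auto
    have e1: "A *\<^sub>v unit_vec r i = col A i" using ij(1) A by (auto intro!: eq_vecI)
    have e2: "A *\<^sub>v unit_vec r j = col A j" using ij(2) A by (auto intro!: eq_vecI)
    have "A *\<^sub>v v = A *\<^sub>v unit_vec r i - A *\<^sub>v unit_vec r j"
      unfolding v_def using A by (auto simp: mult_minus_distrib_mat_vec)
    also have "\<dots> = col A i - col A j" unfolding e1 e2 ..
    also have "col A i - col A j = 0\<^sub>v n" unfolding ci by (rule minus_cancel_vec) (use A ij in auto)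
    finally show False using inj[OF v] nz by auto
  qed
  have "\<not> V.lin_dep (set (cols A))"
  proof
    assume "V.lin_dep (set (cols A))"
    from V.lin_depE[OF A this dist] obtain v where "v \<in> carrier_vec r" "v \<noteq> 0\<^sub>v r" "A *\<^sub>v v = 0\<^sub>v n" .
    thus False using inj by auto
  qed
  thus ?thesis using V.lin_indpt_full_rank[OF A dist] by auto
qed

definition onl :: "real vec list \<Rightarrow> bool" where
  "onl qs \<longleftrightarrow> (\<forall>i<length qs. \<forall>j<length qs. qs!i \<bullet> qs!j = (if i = j then 1 else 0))"

lemma cols_idx: "set qs \<subseteq> carrier_vec n \<Longrightarrow> i < length qs \<Longrightarrow> col (mat_of_cols n qs) i = qs ! i"
  by (intro col_mat_of_cols) auto

lemma onl_mat:
  assumes "set qs \<subseteq> carrier_vec n" "onl qs"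
  shows "transpose_mat (mat_of_cols n qs) * mat_of_cols n qs = 1\<^sub>m (length qs)"
  using assms cols_idx[OF assms(1)] by (intro eq_matI) (auto simp: onl_def)

lemma span_insert_in:
  assumes "S \<subseteq> carrier_vec n" "x \<in> rspan n S"
  shows "rspan n (insert x S) = rspan n S"
proof -
  interpret V: vec_space "TYPE(real)" n .
  have "insert x S \<subseteq> V.span S" using assms V.in_own_span[OF assms(1)] by auto
  hence "V.span (insert x S) \<subseteq> V.span S" using V.span_subsetI[OF assms(1)] by auto
  moreover have "V.span S \<subseteq> V.span (insert x S)" by (intro V.span_is_monotone) auto
  ultimately show ?thesis by auto
qed

lemma span_eqI:
  assumes "A \<subseteq> carrier_vec n" "B \<subseteq> carrier_vec n" "A \<subseteq> rspan n B" "B \<subseteq> rspan n A"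
  shows "rspan n A = rspan n B"
proof -
  interpret V: vec_space "TYPE(real)" n .
  show ?thesis using V.span_subsetI[OF assms(1) assms(4)] V.span_subsetI[OF assms(2) assms(3)] by auto
qed

lemma on_step:
  assumes qs: "set qs \<subseteq> carrier_vec n" "onl qs" and x: "x \<in> carrier_vec n"
  shows "\<exists>ps. set ps \<subseteq> carrier_vec n \<and> onl (ps @ qs) \<and> rspan n (set (ps @ qs)) = rspan n (insert x (set qs))"
proof -
  interpret V: vec_space "TYPE(real)" n .
  define Q where "Q = mat_of_cols n qs"
  define k where "k = length qs"
  have QC: "Q \<in> carrier_mat n k" unfolding Q_def k_def by auto
  have QQ: "transpose_mat Q * Q = 1\<^sub>m k" unfolding Q_def k_def using onl_mat[OF qs] .
  define y where "y = transpose_mat Q *\<^sub>v x"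
  have y: "y \<in> carrier_vec k" unfolding y_def using QC x by auto
  define p where "p = x - Q *\<^sub>v y"
  have Qy: "Q *\<^sub>v y \<in> carrier_vec n" using QC y by auto
  have p: "p \<in> carrier_vec n" unfolding p_def using x Qy by auto
  have "transpose_mat Q *\<^sub>v p = transpose_mat Q *\<^sub>v x - transpose_mat Q *\<^sub>v (Q *\<^sub>v y)"
    unfolding p_def using QC x Qy by (intro mult_minus_distrib_mat_vec) auto
  also have "transpose_mat Q *\<^sub>v (Q *\<^sub>v y) = (transpose_mat Q * Q) *\<^sub>v y"
    using QC y by (intro assoc_mult_mat_vec[symmetric]) auto
  also have "\<dots> = y" using QQ y by simp
  finally have Qp: "transpose_mat Q *\<^sub>v p = 0\<^sub>v k" unfolding y_def[symmetric] using y by auto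
  have perp: "qs ! i \<bullet> p = 0" if "i < k" for i
  proof -
    have "(transpose_mat Q *\<^sub>v p) $ i = qs ! i \<bullet> p"
      using that QC cols_idx[OF qs(1)] unfolding Q_def k_def by auto
    thus ?thesis using Qp that by auto
  qed
  have QyS: "Q *\<^sub>v y \<in> rspan n (set qs)" unfolding Q_def using span_mat1[OF qs(1)] y k_def by auto
  show ?thesis
  proof (cases "p = 0\<^sub>v n")
    case True
    have "x = Q *\<^sub>v y"
    proof (intro eq_vecI)
      fix i assume "i < dim_vec (Q *\<^sub>v y)"
      hence i: "i < n" using QC by auto
      have "p $ i = 0" using True i by simp
      moreover have "(x - Q *\<^sub>v y) $ i = x $ i - (Q *\<^sub>v y) $ i"
        using i QC by (intro index_minus_vec(1)) auto
      ultimately show "x $ i = (Q *\<^sub>v y) $ i" unfolding p_def by simp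
    qed (use x Qy QC in auto)
    hence "rspan n (insert x (set qs)) = rspan n (set qs)"
      using span_insert_in[OF qs(1)] QyS by auto
    thus ?thesis using qs by (intro exI[of _ "[]"]) auto
  next
    case False
    define pp where "pp = p \<bullet> p"
    have pp: "pp > 0" using self_sp_ge[of p] self_sp_zero[OF p] False unfolding pp_def by force
    define s where "s = 1 / sqrt pp"
    define q where "q = s \<cdot>\<^sub>v p"
    have q: "q \<in> carrier_vec n" using p unfolding q_def by auto
    have qq: "q \<bullet> q = 1"
    proof -
      have "q \<bullet> q = s * (s * pp)" unfolding q_def pp_def using p by auto
      also have "\<dots> = 1" unfolding s_def using pp by (simp add: field_simps)
      finally show ?thesis .
    qed
    have qperp1: "q \<bullet> qs ! j = 0" if "j < k" for j
    proof -
      have qj: "qs ! j \<in> carrier_vec n" using qs that k_def by auto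
      hence "p \<bullet> qs ! j = qs ! j \<bullet> p" using comm_scalar_prod p by metis
      thus ?thesis unfolding q_def using perp[OF that] smult_scalar_prod_distrib[OF p qj] by auto
    qed
    have qperp2: "qs ! j \<bullet> q = 0" if "j < k" for j
    proof -
      have qj: "qs ! j \<in> carrier_vec n" using qs that k_def by auto
      thus ?thesis unfolding q_def using perp[OF that] scalar_prod_smult_distrib[OF qj p] by auto
    qed
    have onl': "onl ([q] @ qs)"
      unfolding onl_def
    proof (intro allI impI)
      fix i j assume "i < length ([q] @ qs)" "j < length ([q] @ qs)"
      thus "([q] @ qs) ! i \<bullet> ([q] @ qs) ! j = (if i = j then 1 else 0)"
        using qq qperp1 qperp2 qs(2) unfolding onl_def k_def
        by (cases i; cases j) auto
    qed
    have xS: "x \<in> rspan n (insert x (set qs))" using V.in_own_span[of "insert x (set qs)"] x qs by auto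
    have QyS': "Q *\<^sub>v y \<in> rspan n (insert x (set qs))"
      using QyS V.span_is_monotone[of "set qs" "insert x (set qs)"] by auto
    have "p = x + (-1) \<cdot>\<^sub>v (Q *\<^sub>v y)" unfolding p_def using x Qy by (intro eq_vecI) auto
    also have "\<dots> \<in> rspan n (insert x (set qs))"
      using V.span_add1[OF _ xS V.smult_in_span[OF _ QyS']] x qs by auto
    finally have pS: "p \<in> rspan n (insert x (set qs))" .
    have qS: "q \<in> rspan n (insert x (set qs))" unfolding q_def using V.smult_in_span[OF _ pS] x qs by auto
    have qsS: "set qs \<subseteq> rspan n (insert x (set qs))"
      using V.in_own_span[of "insert x (set qs)"] x qs by auto
    have qsS2: "set qs \<subseteq> rspan n (insert q (set qs))"
      using V.in_own_span[of "insert q (set qs)"] q qs by auto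
    have QyS2: "Q *\<^sub>v y \<in> rspan n (insert q (set qs))"
      using QyS V.span_is_monotone[of "set qs" "insert q (set qs)"] by auto
    have qS2: "q \<in> rspan n (insert q (set qs))" using V.in_own_span[of "insert q (set qs)"] q qs by auto
    have "x = sqrt pp \<cdot>\<^sub>v q + Q *\<^sub>v y"
      unfolding q_def s_def p_def using x Qy pp QC by (intro eq_vecI) auto
    also have "\<dots> \<in> rspan n (insert q (set qs))"
      using V.span_add1[OF _ V.smult_in_span[OF _ qS2] QyS2] q qs by auto
    finally have xS2: "x \<in> rspan n (insert q (set qs))" .
    have "rspan n (insert q (set qs)) = rspan n (insert x (set qs))"
      by (rule span_eqI[of _ n]) (use q x qs qS qsS qsS2 xS2 in auto)
    thus ?thesis using onl' q by (intro exI[of _ "[q]"]) auto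
  qed
qed

lemma span_union_cong:
  assumes "A \<subseteq> carrier_vec n" "B \<subseteq> carrier_vec n" "C \<subseteq> carrier_vec n"
    "rspan n A = rspan n B"
  shows "rspan n (A \<union> C) = rspan n (B \<union> C)"
proof -
  interpret V: vec_space "TYPE(real)" n .
  have 1: "A \<subseteq> rspan n (B \<union> C)"
    using V.in_own_span[OF assms(1)] assms(4) V.span_is_monotone[of B "B \<union> C"] by auto
  have 2: "B \<subseteq> rspan n (A \<union> C)"
    using V.in_own_span[OF assms(2)] assms(4) V.span_is_monotone[of A "A \<union> C"] by auto
  have 3: "C \<subseteq> rspan n (B \<union> C)" "C \<subseteq> rspan n (A \<union> C)"
    using V.in_own_span[of "B \<union> C"] V.in_own_span[of "A \<union> C"] assms by auto
  show ?thesis by (rule span_eqI[of _ n]) (use assms 1 2 3 in auto)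
qed

lemma on_extend:
  assumes "set xs \<subseteq> carrier_vec n" "set qs \<subseteq> carrier_vec n" "onl qs"
  shows "\<exists>ps. set ps \<subseteq> carrier_vec n \<and> onl (ps @ qs) \<and>
     rspan n (set (ps @ qs)) = rspan n (set qs \<union> set xs)"
  using assms
proof (induction xs arbitrary: qs)
  case Nil
  thus ?case by (intro exI[of _ "[]"]) auto
next
  case (Cons x xs)
  obtain ps1 where ps1: "set ps1 \<subseteq> carrier_vec n" "onl (ps1 @ qs)"
     "rspan n (set (ps1 @ qs)) = rspan n (insert x (set qs))"
    using on_step[OF Cons(3,4), of x] Cons(2) by auto
  obtain ps2 where ps2: "set ps2 \<subseteq> carrier_vec n" "onl (ps2 @ (ps1 @ qs))"
     "rspan n (set (ps2 @ (ps1 @ qs))) = rspan n (set (ps1 @ qs) \<union> set xs)"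
    using Cons(1)[of "ps1 @ qs"] Cons(2,3) ps1 by auto
  have "rspan n (set (ps1 @ qs) \<union> set xs) = rspan n (insert x (set qs) \<union> set xs)"
    by (rule span_union_cong[of _ n]) (use Cons(2,3) ps1 in auto)
  also have "insert x (set qs) \<union> set xs = set qs \<union> set (x # xs)" by auto
  finally show ?case using ps1 ps2 by (intro exI[of _ "ps2 @ ps1"]) auto
qed

lemma rowops_clear:
  fixes \<gamma> \<beta> Gt :: "real mat"
  assumes g: "\<gamma> \<in> carrier_mat 1 c1" and Gt: "Gt \<in> carrier_mat l r" and b: "\<beta> \<in> carrier_mat 1 r"
    and a: "\<forall>t<r. \<beta> $$ (0,t) = (\<Sum>k<l. a k * Gt $$ (k,t))"
  shows "row_ops_transform (four_block_mat \<gamma> \<beta> (0\<^sub>m l c1) Gt)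
                           (four_block_mat \<gamma> (0\<^sub>m 1 r) (0\<^sub>m l c1) Gt)"
proof -
  define B where "B s = mat 1 r (\<lambda>(_,t). \<beta> $$ (0,t) - (\<Sum>k<s. a k * Gt $$ (k,t)))" for s
  define F where "F X = four_block_mat \<gamma> X (0\<^sub>m l c1) Gt" for X
  have B0: "B 0 = \<beta>" unfolding B_def using b by (intro eq_matI) auto
  have Bl: "B l = 0\<^sub>m 1 r" unfolding B_def using a by (intro eq_matI) auto
  have step: "F (B (Suc s)) = mat_addrow (- a s) 0 (Suc s) (F (B s))" if s: "s < l" for s
    unfolding F_def B_def mat_addrow_def using g Gt s
    by (intro eq_matI) (auto simp: algebra_simps)
  have "elem_row_op\<^sup>*\<^sup>* (F \<beta>) (F (B s))" if "s \<le> l" for s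
    using that
  proof (induction s)
    case 0 thus ?case using B0 by simp
  next
    case (Suc s)
    have "elem_row_op (F (B s)) (F (B (Suc s)))"
      unfolding step[of s, OF Suc_le_lessD[OF Suc(2)]]
      by (rule elem_row_op.add) (use Suc(2) g Gt in \<open>auto simp: F_def B_def\<close>)
    thus ?case using Suc by auto
  qed
  from this[of l] show ?thesis unfolding row_ops_transform_def F_def Bl by simp
qed

lemma uncovered:
  assumes c: "\<forall>i < tau. c i \<subseteq> {..<n} \<and> card (c i) = 3"
    and nc: "\<not> has_exact_cover n tau c"
    and L: "L \<subseteq> {..<tau}" "3 * card L \<le> n"
  shows "\<exists>j<n. \<forall>i\<in>L. j \<notin> c i"
proof (rule ccontr)
  assume "\<not> ?thesis"
  hence cov: "\<forall>j<n. \<exists>i\<in>L. j \<in> c i" by auto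
  have finL: "finite L" using L finite_subset by blast
  define f where "f x = card {i\<in>L. x \<in> c i}" for x
  have f1: "f x \<ge> 1" if xn: "x < n" for x
  proof -
    obtain i where "i \<in> L" "x \<in> c i" using cov xn by auto
    hence "{i\<in>L. x \<in> c i} \<noteq> {}" by auto
    thus ?thesis unfolding f_def using finL by (simp add: Suc_le_eq card_gt_0_iff)
  qed
  have "(\<Sum>x<n. f x) = (\<Sum>x<n. \<Sum>i\<in>L. if x \<in> c i then 1 else 0)"
    unfolding f_def using finL by (intro sum.cong refl) (simp add: sum.inter_filter[symmetric])
  also have "\<dots> = (\<Sum>i\<in>L. \<Sum>x<n. if x \<in> c i then 1 else 0)" by (rule sum.swap)
  also have "\<dots> = (\<Sum>i\<in>L. card (c i))"
  proof (intro sum.cong refl)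
    fix i assume "i \<in> L"
    hence ci: "c i \<subseteq> {..<n}" using c L by auto
    have "(\<Sum>x<n. if x \<in> c i then 1 else 0) = card {x\<in>{..<n}. x \<in> c i}"
      by (simp add: sum.inter_filter[symmetric])
    also have "{x\<in>{..<n}. x \<in> c i} = c i" using ci by auto
    finally show "(\<Sum>x<n. if x \<in> c i then 1 else 0) = card (c i)" .
  qed
  also have "\<dots> = (\<Sum>i\<in>L. 3)" using c L by (intro sum.cong refl) auto
  also have "\<dots> = 3 * card L" by simp
  finally have sf: "(\<Sum>x<n. f x) \<le> n" using L by simp
  have "\<forall>x<n. f x = 1"
  proof (rule ccontr)
    assume "\<not> (\<forall>x<n. f x = 1)"
    then obtain x0 where x0: "x0 < n" "f x0 \<noteq> 1" by auto
    have lt: "1 < f x0" using f1[OF x0(1)] x0(2) by linarith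
    have "(\<Sum>x<n. (1::nat)) < (\<Sum>x<n. f x)"
      by (rule sum_strict_mono_ex1) (use f1 x0 lt in auto)
    thus False using sf by simp
  qed
  hence "has_exact_cover n tau c" unfolding has_exact_cover_def f_def using L by blast
  thus False using nc by simp
qed

lemma main:
  fixes n j :: nat and gs :: "real vec list"
  assumes gsC: "set gs \<subseteq> carrier_vec n"
    and jn: "j < n" and gj: "\<forall>g\<in>set gs. g $ j = 0"
  shows "\<exists>N \<gamma> \<beta> Gt.
         real_orthogonal n N \<and>
         Gt \<in> carrier_mat (length gs) (vec_space.rank n (mat_of_cols n gs)) \<and>
         vec_space.rank (length gs) Gt = vec_space.rank n (mat_of_cols n gs) \<and>
         \<gamma> \<in> carrier_mat 1 (n - vec_space.rank n (mat_of_cols n gs)) \<and>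
         \<beta> \<in> carrier_mat 1 (vec_space.rank n (mat_of_cols n gs)) \<and>
         (\<exists>j < n - vec_space.rank n (mat_of_cols n gs). \<gamma> $$ (0, j) = 1) \<and>
         mat_of_rows n (vec n (\<lambda>_. 1 :: real) # gs) * N
           = four_block_mat \<gamma> \<beta> (0\<^sub>m (length gs) (n - vec_space.rank n (mat_of_cols n gs))) Gt \<and>
         row_ops_transform (four_block_mat \<gamma> \<beta> (0\<^sub>m (length gs) (n - vec_space.rank n (mat_of_cols n gs))) Gt)
              (four_block_mat \<gamma> (0\<^sub>m 1 (vec_space.rank n (mat_of_cols n gs)))
                 (0\<^sub>m (length gs) (n - vec_space.rank n (mat_of_cols n gs))) Gt)"
proof -
  interpret V: vec_space "TYPE(real)" n .
  define G where "G = mat_of_cols n gs"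
  define r where "r = V.rank G"
  define l where "l = length gs"
  define d where "d = vec n (\<lambda>_. 1 :: real)"
  have dC: "d \<in> carrier_vec n" unfolding d_def by auto
  define e :: "real vec" where "e = unit_vec n j"
  have eC: "e \<in> carrier_vec n" unfolding e_def by auto
  have GC: "G \<in> carrier_mat n l" unfolding G_def l_def by auto
  obtain vs where vs: "set vs \<subseteq> carrier_vec n" "onl vs" "rspan n (set vs) = rspan n (set gs)"
    using on_extend[OF gsC, of "[]" ] by (auto simp: onl_def)
  have eg: "\<forall>g\<in>set gs. g \<bullet> e = 0" using gj jn unfolding e_def by auto
  have vsS: "v \<in> rspan n (set gs)" if "v \<in> set vs" for v
    using V.in_own_span[OF vs(1)] that vs(3) by auto
  have ev: "\<forall>v\<in>set vs. v \<bullet> e = 0"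
    using perp_span[OF gsC eC eg] vsS by auto
  have ee: "e \<bullet> e = 1" using jn unfolding e_def by simp
  have onl_evs: "onl ([e] @ vs)" unfolding onl_def
  proof (intro allI impI)
    fix i i' assume "i < length ([e] @ vs)" "i' < length ([e] @ vs)"
    moreover have "\<And>t. t < length vs \<Longrightarrow> e \<bullet> vs ! t = 0"
      using ev vs(1) comm_scalar_prod[OF eC] by (metis nth_mem subsetD)
    moreover have "\<And>t. t < length vs \<Longrightarrow> vs ! t \<bullet> e = 0" using ev by auto
    ultimately show "([e] @ vs) ! i \<bullet> ([e] @ vs) ! i' = (if i = i' then 1 else 0)"
      using ee vs(2) unfolding onl_def by (cases i; cases i') auto
  qed
  obtain ps where ps: "set ps \<subseteq> carrier_vec n" "onl (ps @ [e] @ vs)"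
    "rspan n (set (ps @ [e] @ vs)) = rspan n (set ([e] @ vs) \<union> set (unit_vecs n))"
    using on_extend[OF unit_vecs_carrier[of n] _ onl_evs] vs(1) eC by auto
  define ws where "ws = ps @ [e]"
  define all where "all = ws @ vs"
  have allC: "set all \<subseteq> carrier_vec n" unfolding all_def ws_def using ps vs eC by auto
  have onl_all: "onl all" unfolding all_def ws_def using ps(2) by simp
  have span_all: "rspan n (set all) = carrier_vec n"
  proof
    show "rspan n (set all) \<subseteq> carrier_vec n" using V.span_is_subset2[OF allC] by simp
    have "carrier_vec n = rspan n (set (unit_vecs n))" using V.span_unit_vecs_is_carrier by simp
    also have "\<dots> \<subseteq> rspan n (set ([e] @ vs) \<union> set (unit_vecs n))"
      by (intro V.span_is_monotone) auto
    finally show "carrier_vec n \<subseteq> rspan n (set all)" using ps(3) unfolding all_def ws_def by simp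
  qed
  define N where "N = mat_of_cols n all"
  define k where "k = length all"
  have NC: "N \<in> carrier_mat n k" unfolding N_def k_def by auto
  have NN: "transpose_mat N * N = 1\<^sub>m k" unfolding N_def k_def using onl_mat[OF allC onl_all] .
  have rankN: "V.rank N = k"
  proof (rule rank_inj[OF NC])
    fix v assume v: "v \<in> carrier_vec k" "N *\<^sub>v v = 0\<^sub>v n"
    have "v = (transpose_mat N * N) *\<^sub>v v" using NN v by simp
    also have "\<dots> = transpose_mat N *\<^sub>v (N *\<^sub>v v)" using NC v by (intro assoc_mult_mat_vec) auto
    also have "\<dots> = 0\<^sub>v k" using v NC by auto
    finally show "v = 0\<^sub>v k" .
  qed
  have rec: "V.vs (carrier_vec n) = module_vec TYPE(real) n"
    using V.carrier_vs_is_self by simp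
  have "V.rank N = vectorspace.dim class_ring (V.vs (carrier_vec n))" unfolding V.rank_def N_def
    using cols_mat_of_cols[OF allC] span_all by simp
  also have "\<dots> = n" by (subst rec) (rule V.dim_is_n)
  finally have kn: "k = n" using rankN by simp
  define Vm where "Vm = mat_of_cols n vs"
  have VmC: "Vm \<in> carrier_mat n (length vs)" unfolding Vm_def by auto
  have VV: "transpose_mat Vm * Vm = 1\<^sub>m (length vs)" unfolding Vm_def using onl_mat[OF vs(1,2)] .
  have rankVm: "V.rank Vm = length vs"
  proof (rule rank_inj[OF VmC])
    fix v assume v: "v \<in> carrier_vec (length vs)" "Vm *\<^sub>v v = 0\<^sub>v n"
    have "v = (transpose_mat Vm * Vm) *\<^sub>v v" using VV v by simp
    also have "\<dots> = transpose_mat Vm *\<^sub>v (Vm *\<^sub>v v)" using VmC v by (intro assoc_mult_mat_vec) auto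
    also have "\<dots> = 0\<^sub>v (length vs)" using v VmC by auto
    finally show "v = 0\<^sub>v (length vs)" .
  qed
  have rvs: "r = length vs" unfolding r_def rankVm[symmetric] V.rank_def G_def Vm_def
    using cols_mat_of_cols[OF gsC] cols_mat_of_cols[OF vs(1)] vs(3) by simp
  have lws: "length ws = n - r" and rn: "r \<le> n" using kn unfolding k_def all_def rvs by auto
  define \<gamma> where "\<gamma> = mat 1 (n - r) (\<lambda>(_, t). d \<bullet> ws ! t)"
  define \<beta> where "\<beta> = mat 1 r (\<lambda>(_, t). d \<bullet> vs ! t)"
  define Gt where "Gt = mat l r (\<lambda>(i, t). gs ! i \<bullet> vs ! t)"
  have GtC: "Gt \<in> carrier_mat l r" unfolding Gt_def by auto
  have \<gamma>C: "\<gamma> \<in> carrier_mat 1 (n - r)" unfolding \<gamma>_def by auto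
  have \<beta>C: "\<beta> \<in> carrier_mat 1 r" unfolding \<beta>_def by auto
  have Gt_eq: "Gt = transpose_mat G * Vm"
    by (intro eq_matI) (auto simp: Gt_def G_def Vm_def cols_idx[OF gsC] cols_idx[OF vs(1)] rvs l_def)
  have rankGt: "vec_space.rank l Gt = r"
  proof (rule rank_inj[OF GtC])
    fix y assume y: "y \<in> carrier_vec r" "Gt *\<^sub>v y = 0\<^sub>v l"
    define u where "u = Vm *\<^sub>v y"
    have uC: "u \<in> carrier_vec n" unfolding u_def using VmC y rvs by auto
    have "transpose_mat G *\<^sub>v u = Gt *\<^sub>v y" unfolding u_def Gt_eq
      using GC VmC y rvs by (intro assoc_mult_mat_vec[symmetric]) auto
    hence Gu: "transpose_mat G *\<^sub>v u = 0\<^sub>v l" using y by simp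
    have gu: "\<forall>g\<in>set gs. g \<bullet> u = 0"
    proof
      fix g assume "g \<in> set gs"
      then obtain i where i: "i < l" "g = gs ! i" unfolding l_def by (auto simp: in_set_conv_nth)
      have "(transpose_mat G *\<^sub>v u) $ i = gs ! i \<bullet> u"
        using i GC cols_idx[OF gsC] unfolding G_def l_def by auto
      thus "g \<bullet> u = 0" using Gu i by simp
    qed
    have uS: "u \<in> rspan n (set gs)" unfolding u_def Vm_def
      using span_mat1[OF vs(1), of y] y rvs vs(3) by auto
    have "u \<bullet> u = 0" using perp_span[OF gsC uC gu uS] .
    hence u0: "u = 0\<^sub>v n" using self_sp_zero[OF uC] by simp
    have "y = (transpose_mat Vm * Vm) *\<^sub>v y" using VV y rvs by simp
    also have "\<dots> = transpose_mat Vm *\<^sub>v u" unfolding u_def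
      using VmC y rvs by (intro assoc_mult_mat_vec) auto
    also have "\<dots> = 0\<^sub>v r" using u0 VmC rvs by auto
    finally show "y = 0\<^sub>v r" .
  qed
  have perpW: "g \<bullet> ws ! t = 0" if gt: "g \<in> set gs" "t < length ws" for g t
  proof -
    have wC: "ws ! t \<in> carrier_vec n" using allC gt(2) unfolding all_def by auto
    have "\<forall>v\<in>set vs. v \<bullet> ws ! t = 0"
    proof
      fix v assume "v \<in> set vs"
      then obtain s where s: "s < length vs" "v = vs ! s" by (auto simp: in_set_conv_nth)
      have H: "\<forall>i<length all. \<forall>j<length all. all ! i \<bullet> all ! j = (if i = j then 1 else 0)"
        using onl_all unfolding onl_def .
      have "all ! (length ws + s) \<bullet> all ! t = 0"
        using H[rule_format, of "length ws + s" t] s gt(2) unfolding all_def by simp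
      thus "v \<bullet> ws ! t = 0" using s gt(2) unfolding all_def by (simp add: nth_append)
    qed
    thus ?thesis using perp_span[OF vs(1) wC] gt(1) vs(3) V.in_own_span[OF gsC] by auto
  qed
  have dj: "d \<bullet> e = 1" using jn unfolding d_def e_def by simp
  have lpn: "length ps < n - r" using lws unfolding ws_def by simp
  have g1: "\<gamma> $$ (0, length ps) = 1" using lpn dj unfolding \<gamma>_def ws_def by (simp add: nth_append)
  have MN: "mat_of_rows n (d # gs) * N = four_block_mat \<gamma> \<beta> (0\<^sub>m l (n - r)) Gt"
  proof (rule eq_matI)
    fix i t assume it: "i < dim_row (four_block_mat \<gamma> \<beta> (0\<^sub>m l (n - r)) Gt)"
      "t < dim_col (four_block_mat \<gamma> \<beta> (0\<^sub>m l (n - r)) Gt)"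
    hence i: "i < Suc l" and t: "t < n" using \<gamma>C GtC rn by auto
    have rowi: "(d # gs) ! i \<in> carrier_vec n" using i dC gsC unfolding l_def
      by (cases i) auto
    have "(mat_of_rows n (d # gs) * N) $$ (i, t) = row (mat_of_rows n (d # gs)) i \<bullet> col N t"
      using i t NC kn unfolding l_def by (intro index_mult_mat(1)) auto
    also have "\<dots> = (d # gs) ! i \<bullet> all ! t"
      using i t kn rowi cols_idx[OF allC] unfolding N_def k_def l_def by auto
    finally have e1: "(mat_of_rows n (d # gs) * N) $$ (i, t) = (d # gs) ! i \<bullet> all ! t" .
    show "(mat_of_rows n (d # gs) * N) $$ (i, t) = four_block_mat \<gamma> \<beta> (0\<^sub>m l (n - r)) Gt $$ (i, t)"
    proof (cases i)
      case 0
      thus ?thesis using e1 t \<gamma>C \<beta>C GtC rn lws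
        by (auto simp: all_def nth_append \<gamma>_def \<beta>_def)
    next
      case (Suc i')
      hence i': "i' < l" using i by simp
      show ?thesis
      proof (cases "t < n - r")
        case True
        have "gs ! i' \<bullet> ws ! t = 0" using perpW[of "gs ! i'" t] i' True lws unfolding l_def by auto
        thus ?thesis using e1 t \<gamma>C \<beta>C GtC rn lws Suc True i'
          by (auto simp: all_def nth_append)
      next
        case False
        thus ?thesis using e1 t \<gamma>C \<beta>C GtC rn lws Suc i'
          by (auto simp: all_def nth_append Gt_def)
      qed
    qed
  qed (use \<gamma>C GtC NC kn rn in \<open>auto simp: l_def\<close>)
  define z where "z = transpose_mat Vm *\<^sub>v d"
  have zC: "z \<in> carrier_vec (length vs)" unfolding z_def using VmC dC by auto
  have "Vm *\<^sub>v z \<in> rspan n (set gs)" unfolding Vm_def using span_mat1[OF vs(1) zC] vs(3) by simp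
  then obtain a where a: "a \<in> carrier_vec l" "Vm *\<^sub>v z = G *\<^sub>v a"
    using span_mat2[OF gsC] unfolding G_def l_def by blast
  have GtT: "transpose_mat Gt = transpose_mat Vm * G"
    unfolding Gt_eq using transpose_mult[of "transpose_mat G" l n Vm "length vs"] GC VmC by auto
  have "transpose_mat Gt *\<^sub>v a = transpose_mat Vm *\<^sub>v (G *\<^sub>v a)"
    unfolding GtT using VmC GC a by (intro assoc_mult_mat_vec) auto
  also have "\<dots> = transpose_mat Vm *\<^sub>v (Vm *\<^sub>v z)" using a by simp
  also have "\<dots> = (transpose_mat Vm * Vm) *\<^sub>v z" using VmC zC by (intro assoc_mult_mat_vec[symmetric]) auto
  also have "\<dots> = z" using VV zC by simp
  finally have Gta: "transpose_mat Gt *\<^sub>v a = z" .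
  have coef: "\<forall>t<r. \<beta> $$ (0,t) = (\<Sum>k<l. a $ k * Gt $$ (k,t))"
  proof (intro allI impI)
    fix t assume t: "t < r"
    have vt: "vs ! t \<in> carrier_vec n" using vs(1) t rvs by auto
    have "\<beta> $$ (0,t) = d \<bullet> vs ! t" unfolding \<beta>_def using t by simp
    also have "\<dots> = vs ! t \<bullet> d" using comm_scalar_prod[OF dC vt] .
    also have "\<dots> = z $ t" unfolding z_def using t rvs VmC cols_idx[OF vs(1)] unfolding Vm_def by auto
    also have "\<dots> = (transpose_mat Gt *\<^sub>v a) $ t" using Gta by simp
    also have "\<dots> = (\<Sum>k<l. a $ k * Gt $$ (k,t))"
      using t GtC a by (auto simp: scalar_prod_def atLeast0LessThan mult.commute)
    finally show "\<beta> $$ (0,t) = (\<Sum>k<l. a $ k * Gt $$ (k,t))" .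
  qed
  have RO: "row_ops_transform (four_block_mat \<gamma> \<beta> (0\<^sub>m l (n - r)) Gt)
                           (four_block_mat \<gamma> (0\<^sub>m 1 r) (0\<^sub>m l (n - r)) Gt)"
    by (rule rowops_clear[OF \<gamma>C GtC \<beta>C coef])
  have orth: "real_orthogonal n N" unfolding real_orthogonal_def using NC NN kn by simp
  show ?thesis
    unfolding G_def[symmetric] r_def[symmetric] l_def[symmetric] d_def[symmetric]
    using orth GtC rankGt \<gamma>C \<beta>C g1 lpn MN RO by blast
qed

theorem lemma5:
  fixes m tau :: nat and c :: "nat \<Rightarrow> nat set" and L :: "nat set"
  assumes "m \<ge> 1"
    and "tau \<ge> m"
    and "\<forall>i < tau. c i \<subseteq> {..<3*m} \<and> card (c i) = 3"
    and "\<not> has_exact_cover (3*m) tau c"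
    and "L \<subseteq> {..<tau}" and "card L \<le> m"
  shows
   "let l = card L;
        gs = map (\<lambda>i. incidence_vec (3*m) (c i)) (sorted_list_of_set L);
        G = mat_of_cols (3*m) gs;
        r = vec_space.rank (3*m) G;
        d = vec (3*m) (\<lambda>_. 1 :: real);
        M = mat_of_rows (3*m) (d # gs)
    in \<exists>N \<gamma> \<beta> Gt.
         real_orthogonal (3*m) N \<and>
         Gt \<in> carrier_mat l r \<and> vec_space.rank l Gt = r \<and>
         \<gamma> \<in> carrier_mat 1 (3*m - r) \<and> \<beta> \<in> carrier_mat 1 r \<and>
         (\<exists>j < 3*m - r. \<gamma> $$ (0, j) = 1) \<and>
         M * N = four_block_mat \<gamma> \<beta> (0\<^sub>m l (3*m - r)) Gt \<and>
         row_ops_transform (four_block_mat \<gamma> \<beta> (0\<^sub>m l (3*m - r)) Gt)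
                           (four_block_mat \<gamma> (0\<^sub>m 1 r) (0\<^sub>m l (3*m - r)) Gt)"
proof -
  have c3: "\<forall>i < tau. c i \<subseteq> {..<3*m} \<and> card (c i) = 3" using assms(3) .
  obtain j where j: "j < 3*m" "\<forall>i\<in>L. j \<notin> c i"
    using uncovered[OF c3 assms(4) assms(5)] assms(6) by auto
  define gs where "gs = map (\<lambda>i. incidence_vec (3*m) (c i)) (sorted_list_of_set L)"
  have finL: "finite L" using assms(5) finite_subset by blast
  have gsC: "set gs \<subseteq> carrier_vec (3*m)" unfolding gs_def incidence_vec_def by auto
  have gj: "\<forall>g\<in>set gs. g $ j = 0"
    using j finL unfolding gs_def incidence_vec_def by auto
  have len: "card L = length gs" unfolding gs_def using finL by simp
  show ?thesis
    unfolding Let_def gs_def[symmetric] len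
    using main[OF gsC j(1) gj] .
qed

end
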